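(* Let $F_1,F_2$ be CCZ-equivalent monomial power permutations of $GF(2^m)$. Then $V^*_{F_1}=V^*_{F_2}$ and $v_{F_1}=v_{F_2}$.
   Context: $n=2^m-1$; a monomial power permutation is $F(x)=x^t$ with $\gcd(t,n)=1$. $S=STS(\mathcal H^n)$ is the set of 3-subsets $\{a,b,c\}$ of nonzero elements with $a+b+c=0$. $v_F(a)=|\{x+F^{-1}(a+F(x)) : x\in GF(2^m)\}|$; with $\{a,a_i,a+a_i\}$ ($i=1,\dots,2^{m-1}-1$) the triples of $S$ through $a$ and $z_i=F(F^{-1}(a_i)+F^{-1}(a+a_i))$, $V^*_F(a)$ is the multiset of multiplicities of the distinct elements of the multiset $\{z_i\}$. For monomial $F$ these do not depend on $a$, and $v_F=v_F(1)$, $V^*_F=V^*_F(1)$. $\mathcal C_F$ is the binary linear code of length $n$ with parity-check matrix whose columns are $\binom{x}{F(x)}$ for nonzero $x$; $\mathcal C_F^*$ is its extension by an overall parity bit; $F_1,F_2$ are CCZ-equivalent if $\mathcal C^*_{F_1}$ and $\mathcal C^*_{F_2}$ are equivalent (one obtained from the other by a coordinate permutation). *)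

theory Defs
  imports Main "HOL-Library.Multiset"
begin

text \<open>The field GF(2^m) is modelled by a finite field type 'a with CARD('a) = 2^m.
  F^{-1} is the Hilbert-choice inverse inv F (F is a bijection in all uses).\<close>

definition v_at :: "('a::field \<Rightarrow> 'a) \<Rightarrow> 'a \<Rightarrow> nat" where
  "v_at F a = card {x + inv F (a + F x) | x. True}"

definition v_F :: "('a::field \<Rightarrow> 'a) \<Rightarrow> nat" where
  "v_F F = v_at F 1"

text \<open>Triples of STS through a, represented by the unordered pairs {a_i, a + a_i}.\<close>
definition triple_pairs :: "'a::field \<Rightarrow> 'a set set" where
  "triple_pairs a = {{b, a + b} | b. b \<noteq> 0 \<and> b \<noteq> a}"

text \<open>z_i = F(F^{-1}(a_i) + F^{-1}(a + a_i)); the sum over the pair is symmetric.\<close>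
definition z_mset :: "('a::field \<Rightarrow> 'a) \<Rightarrow> 'a \<Rightarrow> 'a multiset" where
  "z_mset F a = image_mset (\<lambda>p. F (\<Sum>y\<in>p. inv F y)) (mset_set (triple_pairs a))"

definition Vstar_at :: "('a::field \<Rightarrow> 'a) \<Rightarrow> 'a \<Rightarrow> nat multiset" where
  "Vstar_at F a = image_mset (count (z_mset F a)) (mset_set (set_mset (z_mset F a)))"

definition Vstar :: "('a::field \<Rightarrow> 'a) \<Rightarrow> nat multiset" where
  "Vstar F = Vstar_at F 1"

text \<open>Binary code C_F with parity check columns (x, F x), x nonzero; a binary word is
  identified with its support, a subset of the nonzero field elements.\<close>
definition code_F :: "('a::field \<Rightarrow> 'a) \<Rightarrow> 'a set set" where
  "code_F F = {S. S \<subseteq> - {0} \<and> (\<Sum>x\<in>S. x) = 0 \<and> (\<Sum>x\<in>S. F x) = 0}"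

text \<open>Coordinates of the extended code: Some x for nonzero x, None for the parity bit.\<close>
definition ext_coords :: "'a::field option set" where
  "ext_coords = insert None (Some ` (- {0}))"

definition ext_code_F :: "('a::field \<Rightarrow> 'a) \<Rightarrow> 'a option set set" where
  "ext_code_F F = {Some ` S \<union> (if odd (card S) then {None} else {}) | S. S \<in> code_F F}"

definition codes_equivalent :: "'b set \<Rightarrow> 'b set set \<Rightarrow> 'b set set \<Rightarrow> bool" where
  "codes_equivalent I C1 C2 \<longleftrightarrow> (\<exists>\<sigma>. bij_betw \<sigma> I I \<and> (\<lambda>S. \<sigma> ` S) ` C1 = C2)"

definition CCZ_equiv :: "('a::field \<Rightarrow> 'a) \<Rightarrow> ('a \<Rightarrow> 'a) \<Rightarrow> bool" where
  "CCZ_equiv F1 F2 \<longleftrightarrow> codes_equivalent ext_coords (ext_code_F F1) (ext_code_F F2)"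

end

theory Submission
  imports Defs
begin


lemma char2:
  assumes "card (UNIV :: 'a::{field,finite} set) = 2 ^ m"
  shows "(1::'a) + 1 = 0"
proof -
  have "(\<Sum>x\<in>UNIV. x + (1::'a)) = (\<Sum>x\<in>UNIV. x)"
    by (rule sum.reindex_bij_betw) (rule bij_betw_byWitness[where f'="\<lambda>x. x - 1"], auto)
  hence "of_nat (card (UNIV::'a set)) = (0::'a)"
    by (simp add: sum.distrib)
  hence "(2::'a) ^ m = 0" using assms by simp
  hence "(2::'a) = 0" by simp
  thus ?thesis by simp
qed

lemma add_self:
  assumes "(1::'a::field) + 1 = 0" shows "(x::'a) + x = 0"
proof -
  have "x + x = x * (1 + 1)" by (simp add: algebra_simps)
  thus ?thesis using assms by simp
qed

lemma fermat:
  assumes "(x::'a::{field,finite}) \<noteq> 0"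
  shows "x ^ (card (UNIV::'a set) - 1) = 1"
proof -
  let ?S = "- {0::'a}"
  have bij: "bij_betw ((*) x) ?S ?S"
    by (rule bij_betw_byWitness[where f'="\<lambda>y. y / x"]) (use assms in auto)
  have "(\<Prod>y\<in>?S. x * y) = (\<Prod>y\<in>?S. y)"
    by (rule prod.reindex_bij_betw[OF bij])
  hence "x ^ card ?S * (\<Prod>y\<in>?S. y) = (\<Prod>y\<in>?S. y)"
    by (simp add: prod.distrib)
  moreover have "(\<Prod>y\<in>?S. y) \<noteq> 0" by simp
  ultimately have "x ^ card ?S = 1" by simp
  moreover have "card ?S = card (UNIV::'a set) - 1"
    by (simp add: Compl_eq_Diff_UNIV card_Diff_singleton)
  ultimately show ?thesis by simp
qed

lemma pow_inj:
  assumes t: "0 < t" "coprime t (card (UNIV::'a::{field,finite} set) - 1)"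
  shows "inj (\<lambda>x::'a. x ^ t)"
proof (rule injI)
  fix x y :: 'a assume eq: "x ^ t = y ^ t"
  show "x = y"
  proof (cases "y = 0")
    case True thus ?thesis using eq t by (simp add: zero_power)
  next
    case False
    hence x0: "x \<noteq> 0" using eq t by (metis power_not_zero zero_power)
    let ?z = "x / y"
    have z0: "?z \<noteq> 0" using x0 False by simp
    have zt: "?z ^ t = 1" using eq False by (simp add: power_divide)
    let ?n = "card (UNIV::'a set) - 1"
    have zn: "?z ^ ?n = 1" using fermat[OF z0] .
    obtain i j where ij: "t * i = ?n * j + gcd t ?n"
      using bezout_nat[of t ?n] t by auto
    hence ij1: "t * i = ?n * j + 1" using t by simp
    have "?z ^ (t * i) = 1" using zt by (simp add: power_mult)
    moreover have "?z ^ (?n * j + 1) = ?z" using zn by (simp add: power_mult power_add)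
    ultimately have "?z = 1" using ij1 by simp
    thus ?thesis using False by simp
  qed
qed




lemma card_sets_bij:
  assumes g: "bij g" and PQ: "\<And>T. P T \<longleftrightarrow> Q (g ` T)"
  shows "card {T. P T} = card {T. Q T}"
proof -
  have "{T. Q T} = (`) g ` {T. P T}"
  proof (rule set_eqI, rule iffI)
    fix T assume "T \<in> {T. Q T}"
    moreover have "g ` (inv g ` T) = T" using g by (simp add: bij_is_surj image_image surj_f_inv_f)
    ultimately show "T \<in> (`) g ` {T. P T}" using PQ[of "inv g ` T"] by (metis image_eqI mem_Collect_eq)
  qed (use PQ in auto)
  moreover have "inj ((`) g)" using g by (intro injI) (simp add: bij_is_inj inj_image_eq_iff)
  ultimately show ?thesis by (simp add: card_image inj_on_subset)
qed

lemma card_elems_bij: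
  assumes g: "bij g" and PQ: "\<And>x. P x \<longleftrightarrow> Q (g x)"
  shows "card {x. P x} = card {x. Q x}"
proof -
  have "{x. Q x} = g ` {x. P x}"
  proof (rule set_eqI, rule iffI)
    fix y assume "y \<in> {x. Q x}"
    moreover have "g (inv g y) = y" using g by (simp add: bij_is_surj surj_f_inv_f)
    ultimately show "y \<in> g ` {x. P x}" using PQ[of "inv g y"] by (metis image_eqI mem_Collect_eq)
  qed (use PQ in auto)
  moreover have "inj_on g {x. P x}" using inj_on_subset[OF bij_is_inj[OF g] subset_UNIV] .
  ultimately show ?thesis by (simp add: card_image)
qed

locale mono =
  fixes t m :: nat and F :: "'a::{field,finite} \<Rightarrow> 'a"
  assumes card: "card (UNIV :: 'a set) = 2 ^ m"
    and tpos: "0 < t" and tcop: "coprime t (2 ^ m - 1)"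
    and F_def: "F = (\<lambda>x. x ^ t)"
begin

lemma c2: "(x::'a) + x = 0"
  using add_self char2[OF card] by blast

lemma two0: "(2::'a) = 0" using c2[of 1] by simp

lemma add_eq0: "(x::'a) + y = 0 \<longleftrightarrow> x = y"
  by (metis add.commute add_diff_cancel_left' c2 diff_add_cancel)

lemma add_cancel_sym: "(x::'a) + y = z \<longleftrightarrow> y = x + z"
  by (metis add.assoc add.left_neutral c2)

lemma injF: "inj F"
proof -
  have "coprime t (card (UNIV::'a set) - 1)" using tcop card by simp
  thus ?thesis using pow_inj[of t] tpos unfolding F_def by blast
qed

lemma bijF: "bij F"
  using injF by (simp add: bij_def finite_UNIV_inj_surj)

lemma invF1[simp]: "inv F (F x) = x" using injF by simp
lemma invF2[simp]: "F (inv F y) = y" using bijF by (simp add: bij_is_surj surj_f_inv_f)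

lemma F0[simp]: "F 0 = 0" using tpos by (simp add: F_def zero_power)
lemma F1[simp]: "F 1 = 1" by (simp add: F_def)
lemma Fmult: "F (x * y) = F x * F y" by (simp add: F_def power_mult_distrib)
lemma Finverse: "F (inverse x) = inverse (F x)" by (simp add: F_def power_inverse)
lemma Feq[simp]: "F x = F y \<longleftrightarrow> x = y" using injF by (auto dest: injD)
lemma Feq0[simp]: "F x = 0 \<longleftrightarrow> x = 0" using Feq[of x 0] by simp

definition K :: "'a \<Rightarrow> 'a \<Rightarrow> nat" where
  "K c b = card {q. card q = 2 \<and> (\<Sum>x\<in>q. x) = c \<and> (\<Sum>x\<in>q. F x) = b}"

lemma sum_scale: "(\<Sum>x\<in>(*) a ` q. x) = a * (\<Sum>x\<in>q. x)" if "a \<noteq> (0::'a)"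
  using that by (simp add: sum.reindex inj_on_def sum_distrib_left)

lemma sumF_scale: "(\<Sum>x\<in>(*) a ` q. F x) = F a * (\<Sum>x\<in>q. F x)" if "a \<noteq> (0::'a)"
  using that by (simp add: sum.reindex inj_on_def sum_distrib_left Fmult)

lemma bij_scale: "a \<noteq> (0::'a) \<Longrightarrow> bij ((*) a)"
  by (rule bij_betw_byWitness[where f'="\<lambda>x. x / a"]) auto

lemma card_scale: "a \<noteq> (0::'a) \<Longrightarrow> card ((*) a ` q) = card q"
  by (simp add: card_image inj_on_def)

lemma K_scale: assumes "a \<noteq> 0" shows "K (a * c) (F a * b) = K c b"
  unfolding K_def
  by (rule card_sets_bij[OF bij_scale[OF assms], symmetric])
     (simp add: card_scale sum_scale sumF_scale assms)

lemma pair_sum_ne0: "card q = 2 \<Longrightarrow> (\<Sum>x\<in>q. x) \<noteq> (0::'a)"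
  by (auto simp: card_2_iff add_eq0)

lemma pair_sumF_ne0: "card q = 2 \<Longrightarrow> (\<Sum>x\<in>q. F x) \<noteq> (0::'a)"
  by (auto simp: card_2_iff add_eq0)

lemma K0_left: "K 0 b = 0"
proof -
  have "{q. card q = 2 \<and> (\<Sum>x\<in>q. x) = 0 \<and> (\<Sum>x\<in>q. F x) = b} = {}" using pair_sum_ne0 by blast
  thus ?thesis unfolding K_def by simp
qed
lemma K0_right: "K c 0 = 0"
proof -
  have "{q. card q = 2 \<and> (\<Sum>x\<in>q. x) = c \<and> (\<Sum>x\<in>q. F x) = 0} = {}" using pair_sumF_ne0 by blast
  thus ?thesis unfolding K_def by simp
qed

lemma K_inv: "K c 1 = K 1 (F (inverse c))"
proof (cases "c = 0")
  case True thus ?thesis by (simp add: K0_left K0_right)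
next
  case False
  have "K (inverse c * c) (F (inverse c) * 1) = K c 1"
    by (rule K_scale) (use False in simp)
  moreover have "inverse c * c = 1" using False by simp
  ultimately have "K 1 (F (inverse c) * 1) = K c 1" by (simp only:)
  thus ?thesis by (simp only: mult_1_right)
qed

lemma K11_pos: "0 < K 1 1"
proof -
  define S where "S = {q. card q = 2 \<and> (\<Sum>x\<in>q. x) = 1 \<and> (\<Sum>x\<in>q. F x) = (1::'a)}"
  have "{0,1} \<in> S" unfolding S_def by simp
  hence ne: "S \<noteq> {}" by blast
  have fin: "finite S" by (rule finite_subset[OF subset_UNIV]) simp
  have "0 < card S" using ne fin by (simp add: card_gt_0_iff)
  thus ?thesis unfolding K_def S_def .
qed

end



definition cls :: "'a set set \<Rightarrow> 'a set \<Rightarrow> nat" where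
  "cls E p = card {q. card q = 2 \<and> (q = p \<or> p \<union> q \<in> E)}"
definition cnt :: "'a set set \<Rightarrow> nat \<Rightarrow> nat" where
  "cnt E k = card {p. card p = 2 \<and> cls E p = k}"
definition cntx :: "'a set set \<Rightarrow> 'a \<Rightarrow> nat \<Rightarrow> nat" where
  "cntx E x k = card {y. y \<noteq> x \<and> cls E {x, y} = k}"
definition U :: "'a set set \<Rightarrow> nat \<Rightarrow> nat \<Rightarrow> nat" where
  "U E n k0 = card {x. \<forall>k. cntx E x k = (if k = k0 then n else 0)}"

locale equiv_sets =
  fixes g :: "'a \<Rightarrow> 'a" and E1 E2 :: "'a set set"
  assumes g: "bij g" and E: "\<And>T. T \<in> E1 \<longleftrightarrow> g ` T \<in> E2"
begin

lemma ginj: "inj g" using g by (simp add: bij_is_inj)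

lemma cls_inv: "cls E2 (g ` p) = cls E1 p"
  unfolding cls_def
proof (rule card_sets_bij[OF g, symmetric])
  fix q
  show "(card q = 2 \<and> (q = p \<or> p \<union> q \<in> E1)) =
        (card (g ` q) = 2 \<and> (g ` q = g ` p \<or> g ` p \<union> g ` q \<in> E2))"
    using E[of "p \<union> q"] ginj by (simp add: card_image inj_on_subset image_Un inj_image_eq_iff)
qed

lemma gcard: "card (g ` p) = card p"
  by (rule card_image) (rule inj_on_subset[OF ginj], simp)

lemma cnt_inv: "cnt E2 k = cnt E1 k"
  unfolding cnt_def
  by (rule card_sets_bij[OF g, symmetric]) (simp add: cls_inv gcard)

lemma cntx_inv: "cntx E2 (g x) k = cntx E1 x k"
  unfolding cntx_def
proof (rule card_elems_bij[OF g, symmetric])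
  fix y
  have "cls E2 {g x, g y} = cls E1 {x, y}" using cls_inv[of "{x, y}"] by simp
  thus "(y \<noteq> x \<and> cls E1 {x, y} = k) = (g y \<noteq> g x \<and> cls E2 {g x, g y} = k)"
    using ginj by (simp add: cls_inv inj_eq)
qed

lemma U_inv: "U E2 n k0 = U E1 n k0"
  unfolding U_def
  by (rule card_elems_bij[OF g, symmetric]) (simp add: cntx_inv)

end

context mono begin

definition E :: "'a set set" where
  "E = {T. card T = 4 \<and> (\<Sum>x\<in>T. x) = 0 \<and> (\<Sum>x\<in>T. F x) = 0}"

lemma pair_rel:
  assumes p: "card p = 2" and q: "card q = 2"
  shows "(q = p \<or> p \<union> q \<in> E) \<longleftrightarrow>
         ((\<Sum>x\<in>q. x) = (\<Sum>x\<in>p. x) \<and> (\<Sum>x\<in>q. F x) = (\<Sum>x\<in>p. F x))"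
proof
  assume "q = p \<or> p \<union> q \<in> E"
  thus "(\<Sum>x\<in>q. x) = (\<Sum>x\<in>p. x) \<and> (\<Sum>x\<in>q. F x) = (\<Sum>x\<in>p. F x)"
  proof
    assume "p \<union> q \<in> E"
    hence u: "card (p \<union> q) = 4" "(\<Sum>x\<in>p \<union> q. x) = 0" "(\<Sum>x\<in>p \<union> q. F x) = 0"
      unfolding E_def by auto
    have fin: "finite p" "finite q" using p q by (auto intro: card_ge_0_finite)
    have "card (p \<union> q) + card (p \<inter> q) = card p + card q" using card_Un_Int[OF fin] by simp
    hence "p \<inter> q = {}" using u p q fin by simp
    hence "(\<Sum>x\<in>p. x) + (\<Sum>x\<in>q. x) = 0" "(\<Sum>x\<in>p. F x) + (\<Sum>x\<in>q. F x) = 0"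
      using u fin by (simp_all add: sum.union_disjoint)
    thus ?thesis by (simp add: add_eq0)
  qed simp
next
  assume s: "(\<Sum>x\<in>q. x) = (\<Sum>x\<in>p. x) \<and> (\<Sum>x\<in>q. F x) = (\<Sum>x\<in>p. F x)"
  show "q = p \<or> p \<union> q \<in> E"
  proof (cases "q = p")
    case False
    obtain x y where xy: "x \<noteq> y" "p = {x, y}" using p by (auto simp: card_2_iff)
    obtain z w where zw: "z \<noteq> w" "q = {z, w}" using q by (auto simp: card_2_iff)
    have e1: "z + w = x + y" and e2: "F z + F w = F x + F y" using s xy zw by auto
    have d: "x \<noteq> z" "x \<noteq> w" "y \<noteq> z" "y \<noteq> w"
      using e1 False xy zw by (auto simp: insert_commute)
    have "card (p \<union> q) = 4" using xy zw d by auto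
    moreover have dj: "p \<inter> q = {}" using xy zw d by auto
    have u1: "(\<Sum>v\<in>p \<union> q. v) = (\<Sum>v\<in>p. v) + (\<Sum>v\<in>q. v)"
      and u2: "(\<Sum>v\<in>p \<union> q. F v) = (\<Sum>v\<in>p. F v) + (\<Sum>v\<in>q. F v)"
      using dj xy zw by (simp_all add: sum.union_disjoint)
    have "(\<Sum>v\<in>p \<union> q. v) = 0" using u1 s c2 by metis
    moreover have "(\<Sum>v\<in>p \<union> q. F v) = 0" using u2 s c2 by metis
    ultimately show ?thesis unfolding E_def by simp
  qed simp
qed

lemma cls_K: assumes p: "card p = 2" shows "cls E p = K (\<Sum>x\<in>p. x) (\<Sum>x\<in>p. F x)"
proof -
  have "{q. card q = 2 \<and> (q = p \<or> p \<union> q \<in> E)}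
      = {q. card q = 2 \<and> (\<Sum>x\<in>q. x) = (\<Sum>x\<in>p. x) \<and> (\<Sum>x\<in>q. F x) = (\<Sum>x\<in>p. F x)}"
    using pair_rel[OF p] by blast
  thus ?thesis unfolding cls_def K_def by simp
qed

end



context mono begin


lemma card_nz: "card (- {0::'a}) = (card (UNIV::'a set) - 1)" by (simp add: Compl_eq_Diff_UNIV card_Diff_singleton)

lemma n_pos: "0 < (card (UNIV::'a set) - 1)"
proof -
  have "card {0::'a, 1} \<le> card (UNIV::'a set)" by (rule card_mono) auto
  thus ?thesis by simp
qed

lemma stepA: "card {p. card p = 2 \<and> K (\<Sum>x\<in>p. x) (\<Sum>x\<in>p. F x) = k}
   = (card (UNIV::'a set) - 1) * card {p. card p = 2 \<and> (\<Sum>x\<in>p. x) = 1 \<and> K 1 (\<Sum>x\<in>p. F x) = k}"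
proof -
  define A where "A a = {p. card p = 2 \<and> (\<Sum>x\<in>p. x) = a \<and> K a (\<Sum>x\<in>p. F x) = k}" for a
  have S: "{p. card p = 2 \<and> K (\<Sum>x\<in>p. x) (\<Sum>x\<in>p. F x) = k} = (\<Union>a\<in>- {0}. A a)"
  proof (rule set_eqI, rule iffI)
    fix p assume "p \<in> {p. card p = 2 \<and> K (\<Sum>x\<in>p. x) (\<Sum>x\<in>p. F x) = k}"
    hence "card p = 2" "K (\<Sum>x\<in>p. x) (\<Sum>x\<in>p. F x) = k" by auto
    moreover have "(\<Sum>x\<in>p. x) \<in> - {0}" using pair_sum_ne0[OF \<open>card p = 2\<close>] by simp
    ultimately show "p \<in> (\<Union>a\<in>- {0}. A a)" unfolding A_def by blast
  qed (auto simp: A_def)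
  have cA: "card (A a) = card (A 1)" if a: "a \<in> - {0}" for a
  proof -
    have a0: "a \<noteq> 0" using a by simp
    show ?thesis unfolding A_def
    proof (rule card_sets_bij[OF bij_scale[OF a0], symmetric])
      fix q
      have "K a (F a * (\<Sum>x\<in>q. F x)) = K (a * 1) (F a * (\<Sum>x\<in>q. F x))" by simp
      also have "\<dots> = K 1 (\<Sum>x\<in>q. F x)" by (rule K_scale[OF a0])
      finally show "(card q = 2 \<and> (\<Sum>x\<in>q. x) = 1 \<and> K 1 (\<Sum>x\<in>q. F x) = k) =
         (card ((*) a ` q) = 2 \<and> (\<Sum>x\<in>(*) a ` q. x) = a \<and> K a (\<Sum>x\<in>(*) a ` q. F x) = k)"
        using a0 by (simp add: card_scale sum_scale sumF_scale)
    qed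
  qed
  have "card (\<Union>a\<in>- {0}. A a) = (\<Sum>a\<in>- {0}. card (A a))"
    by (rule card_UN_disjoint) (auto simp: A_def)
  also have "\<dots> = (\<Sum>a\<in>- {0::'a}. card (A 1))" by (intro sum.cong refl cA)
  also have "\<dots> = (card (UNIV::'a set) - 1) * card (A 1)" using card_nz by simp
  finally show ?thesis using S by (simp add: A_def)
qed

lemma stepB: "card {p. card p = 2 \<and> (\<Sum>x\<in>p. x) = 1 \<and> K 1 (\<Sum>x\<in>p. F x) = k}
   = k * card {b. K 1 b = k}"
proof -
  define B where "B b = {p. card p = 2 \<and> (\<Sum>x\<in>p. x) = (1::'a) \<and> (\<Sum>x\<in>p. F x) = b}" for b
  have S: "{p. card p = 2 \<and> (\<Sum>x\<in>p. x) = 1 \<and> K 1 (\<Sum>x\<in>p. F x) = k} = (\<Union>b\<in>{b. K 1 b = k}. B b)"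
    unfolding B_def by auto
  have "card (\<Union>b\<in>{b. K 1 b = k}. B b) = (\<Sum>b\<in>{b. K 1 b = k}. card (B b))"
    by (rule card_UN_disjoint) (auto simp: B_def)
  also have "\<dots> = (\<Sum>b\<in>{b. K 1 b = k}. k)" by (rule sum.cong) (auto simp: B_def K_def)
  finally show ?thesis using S by simp
qed

lemma cnt_E: "cnt E k = (card (UNIV::'a set) - 1) * (k * card {b. K 1 b = k})"
proof -
  have "{p. card p = 2 \<and> cls E p = k} = {p. card p = 2 \<and> K (\<Sum>x\<in>p. x) (\<Sum>x\<in>p. F x) = k}"
  proof (rule Collect_cong)
    fix p show "(card p = 2 \<and> cls E p = k) = (card p = 2 \<and> K (\<Sum>x\<in>p. x) (\<Sum>x\<in>p. F x) = k)"
      using cls_K[of p] by auto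
  qed
  hence "cnt E k = card {p. card p = 2 \<and> K (\<Sum>x\<in>p. x) (\<Sum>x\<in>p. F x) = k}"
    unfolding cnt_def by simp
  thus ?thesis using stepA stepB by simp
qed

lemma cntx_E: "cntx E x k = card {y. y \<noteq> x \<and> K (x + y) (F x + F y) = k}"
proof -
  have "{y. y \<noteq> x \<and> cls E {x, y} = k} = {y. y \<noteq> x \<and> K (x + y) (F x + F y) = k}"
  proof (rule Collect_cong)
    fix y show "(y \<noteq> x \<and> cls E {x, y} = k) = (y \<noteq> x \<and> K (x + y) (F x + F y) = k)"
    proof (cases "y = x")
      case False
      hence "card {x, y} = 2" by simp
      from cls_K[OF this] False show ?thesis by simp
    qed simp
  qed
  thus ?thesis unfolding cntx_def by simp
qed

lemma cntx_E0: "cntx E 0 k = (if k = K 1 1 then (card (UNIV::'a set) - 1) else 0)"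
proof -
  have "K y (F y) = K 1 1" if "y \<noteq> 0" for y
    using K_scale[OF that, of 1 1] by simp
  hence "{y. y \<noteq> 0 \<and> K (0 + y) (F 0 + F y) = k} = (if k = K 1 1 then - {0} else {})"
    by (cases "k = K 1 1") auto
  thus ?thesis unfolding cntx_E using card_nz by simp
qed

lemma cntx_Ex: assumes x0: "x \<noteq> 0" shows "cntx E x k = cntx E 1 k"
  unfolding cntx_E
proof (rule card_elems_bij[OF bij_scale[OF x0], symmetric])
  fix y
  have "K (x + x * y) (F x + F (x * y)) = K (x * (1 + y)) (F x * (1 + F y))"
    by (simp add: algebra_simps Fmult)
  also have "\<dots> = K (1 + y) (1 + F y)" by (rule K_scale[OF x0])
  moreover have "x * y \<noteq> x \<longleftrightarrow> y \<noteq> 1" using x0 by simp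
  ultimately show "(y \<noteq> 1 \<and> K (1 + y) (F 1 + F y) = k) = (x * y \<noteq> x \<and> K (x + x * y) (F x + F (x * y)) = k)"
    by simp
qed

end



lemma count_image_mset_set:
  assumes "finite A"
  shows "count (image_mset f (mset_set A)) x = card {a\<in>A. f a = x}"
proof -
  have "count (image_mset f (mset_set A)) x = (\<Sum>y\<in>f -` {x} \<inter> A. count (mset_set A) y)"
    using assms by (simp add: count_image_mset)
  also have "\<dots> = (\<Sum>y\<in>f -` {x} \<inter> A. 1)" using assms by (intro sum.cong) auto
  also have "\<dots> = card {a\<in>A. f a = x}" by (simp add: Int_commute Collect_conj_eq vimage_def)
  finally show ?thesis .
qed

context mono begin

lemma U_E: "U E (card (UNIV::'a set) - 1) k0 = (if k0 = K 1 1 then 1 else 0)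
     + (if (\<forall>k. cntx E 1 k = (if k = k0 then (card (UNIV::'a set) - 1) else 0)) then (card (UNIV::'a set) - 1) else 0)"
proof -
  let ?Q = "\<lambda>x. \<forall>k. cntx E x k = (if k = k0 then (card (UNIV::'a set) - 1) else 0)"
  have Q0: "?Q 0 \<longleftrightarrow> k0 = K 1 1"
  proof
    assume "?Q 0" thus "k0 = K 1 1" using spec[of _ "K 1 1"] n_pos by (auto simp: cntx_E0 split: if_splits)
  qed (auto simp: cntx_E0)
  have "{x. ?Q x} = (if k0 = K 1 1 then {0} else {}) \<union> (if ?Q 1 then - {0} else {})"
  proof (rule set_eqI)
    fix x
    show "x \<in> {x. ?Q x} \<longleftrightarrow> x \<in> (if k0 = K 1 1 then {0} else {}) \<union> (if ?Q 1 then - {0} else {})"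
    proof (cases "x = 0")
      case True thus ?thesis using Q0 by simp
    next
      case False
      have e: "\<And>k. cntx E x k = cntx E 1 k" using cntx_Ex[OF False] .
      have "?Q x \<longleftrightarrow> ?Q 1" by (simp only: e)
      thus ?thesis using False by simp
    qed
  qed
  moreover have "card ((if k0 = K 1 1 then {0::'a} else {}) \<union> (if ?Q 1 then - {0} else {}))
     = (if k0 = K 1 1 then 1 else 0) + (if ?Q 1 then (card (UNIV::'a set) - 1) else 0)"
    by (auto simp: card_nz card_Un_disjoint)
  ultimately show ?thesis unfolding U_def by simp
qed

lemma TP: "triple_pairs (1::'a) = {p. card p = 2 \<and> (\<Sum>x\<in>p. x) = 1 \<and> p \<noteq> {0, 1}}"
proof (rule set_eqI, rule iffI)
  fix p assume "p \<in> triple_pairs (1::'a)"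
  then obtain b where b: "p = {b, 1 + b}" "b \<noteq> 0" "b \<noteq> 1" unfolding triple_pairs_def by auto
  have ne: "b \<noteq> 1 + b" by simp
  have s: "b + (1 + b) = 1" using c2[of b] by (simp only: add.commute add.left_commute) simp
  have c: "card p = 2" using b(1) ne by simp
  have sp: "(\<Sum>x\<in>p. x) = 1" using b(1) ne s by simp
  have "p \<noteq> {0, 1}" using b by blast
  thus "p \<in> {p. card p = 2 \<and> (\<Sum>x\<in>p. x) = 1 \<and> p \<noteq> {0, 1}}" using c sp by simp
next
  fix p assume "p \<in> {p. card p = 2 \<and> (\<Sum>x\<in>p. x) = (1::'a) \<and> p \<noteq> {0, 1}}"
  hence p: "card p = 2" "(\<Sum>x\<in>p. x) = (1::'a)" "p \<noteq> {0,1}" by auto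
  have "\<exists>x y. p = {x, y} \<and> x \<noteq> y" using p(1) by (simp add: card_2_iff)
  then obtain x y where xy: "x \<noteq> y" "p = {x, y}" by blast
  have xy1: "x + y = 1" using xy p(2) by simp
  have y: "y = 1 + x" using add_cancel_sym[of x y 1] xy1 by (simp add: add.commute)
  have x0: "x \<noteq> 0"
  proof
    assume "x = 0" hence "p = {0, 1}" using xy y by simp
    thus False using p(3) by simp
  qed
  have x1: "x \<noteq> 1"
  proof
    assume "x = 1" hence "y = 0" using y c2[of 1] by simp
    hence "p = {0, 1}" using xy \<open>x = 1\<close> by auto
    thus False using p(3) by simp
  qed
  show "p \<in> triple_pairs 1" unfolding triple_pairs_def using xy(2) y x0 x1 by blast
qed

lemma count_z: "count (z_mset F 1) (F c) = K c 1 - (if c = 1 then 1 else 0)"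
proof -
  have fin: "finite (triple_pairs (1::'a))" by simp
  have "count (z_mset F 1) (F c) = card {p \<in> triple_pairs 1. F (\<Sum>y\<in>p. inv F y) = F c}"
    unfolding z_mset_def by (rule count_image_mset_set[OF fin])
  also have "\<dots> = card {q. card q = 2 \<and> (\<Sum>x\<in>q. x) = c \<and> (\<Sum>x\<in>q. F x) = 1 \<and> q \<noteq> {0, 1}}"
  proof (rule card_sets_bij[OF bijF, symmetric])
    fix q
    have i: "inj_on F q" using injF inj_on_subset by blast
    have "F ` q = {0, 1} \<longleftrightarrow> q = {0, 1}"
    proof -
      have "F ` {0,1} = {0, 1}" by simp
      thus ?thesis using injF by (metis inj_image_eq_iff)
    qed
    moreover have "(\<Sum>y\<in>F ` q. inv F y) = (\<Sum>x\<in>q. x)" by (simp add: sum.reindex[OF i])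
    moreover have "(\<Sum>y\<in>F ` q. y) = (\<Sum>x\<in>q. F x)" by (simp add: sum.reindex[OF i])
    ultimately show "(card q = 2 \<and> (\<Sum>x\<in>q. x) = c \<and> (\<Sum>x\<in>q. F x) = 1 \<and> q \<noteq> {0, 1}) =
      (F ` q \<in> triple_pairs 1 \<and> F (\<Sum>y\<in>F ` q. inv F y) = F c)"
      unfolding TP by (auto simp: card_image[OF i])
  qed
  also have "\<dots> = K c 1 - (if c = 1 then 1 else 0)"
  proof -
    let ?S = "{q. card q = 2 \<and> (\<Sum>x\<in>q. x) = c \<and> (\<Sum>x\<in>q. F x) = (1::'a)}"
    have "{q. card q = 2 \<and> (\<Sum>x\<in>q. x) = c \<and> (\<Sum>x\<in>q. F x) = 1 \<and> q \<noteq> {0, 1}} = ?S - {{0,1}}" by auto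
    moreover have "{0,1} \<in> ?S \<longleftrightarrow> c = 1" by auto
    ultimately show ?thesis unfolding K_def by (simp add: card_Diff_singleton_if)
  qed
  finally show ?thesis .
qed

definition G :: "'a \<Rightarrow> nat" where "G b = K 1 b - (if b = 1 then 1 else 0)"

lemma count_z_G: "count (z_mset F 1) (F c) = G (F (inverse c))"
proof -
  have "F (inverse c) = 1 \<longleftrightarrow> c = 1" by (metis F1 Feq Finverse inverse_1 inverse_inverse_eq)
  thus ?thesis unfolding count_z G_def K_inv by simp
qed

lemma bij_rho: "bij (\<lambda>c. F (inverse c))"
proof -
  have "bij (inverse :: 'a \<Rightarrow> 'a)"
    by (rule bij_betw_byWitness[where f'=inverse]) auto
  thus ?thesis using bijF by (simp add: bij_comp[unfolded comp_def])
qed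

lemma card_z: "card {z. P (count (z_mset F 1) z)} = card {b. P (G b)}"
proof -
  have "card {z. P (count (z_mset F 1) z)} = card {c. P (count (z_mset F 1) (F c))}"
    by (rule card_elems_bij[OF bijF, symmetric]) simp
  also have "\<dots> = card {b. P (G b)}"
    unfolding count_z_G by (rule card_elems_bij[OF bij_rho]) simp
  finally show ?thesis .
qed

lemma count_Vstar: "count (Vstar F) k = (if k = 0 then 0 else card {b. G b = k})"
proof -
  have "count (Vstar F) k = card {z \<in> set_mset (z_mset F 1). count (z_mset F 1) z = k}"
    unfolding Vstar_def Vstar_at_def by (rule count_image_mset_set) simp
  also have "\<dots> = (if k = 0 then 0 else card {z. count (z_mset F 1) z = k})"
    by (cases "k = 0") (auto intro: arg_cong[where f=card])
  finally show ?thesis using card_z[of "\<lambda>x. x = k"] by simp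
qed

lemma size_Vstar: "size (Vstar F) = card {b. 0 < G b}"
proof -
  have "size (Vstar F) = card (set_mset (z_mset F 1))"
    unfolding Vstar_def Vstar_at_def by simp
  also have "set_mset (z_mset F 1) = {z. 0 < count (z_mset F 1) z}" by auto
  finally show ?thesis using card_z[of "\<lambda>x. 0 < x"] by simp
qed

end



context mono begin

lemma v_set: "{x + inv F (1 + F x) | x. True} = {c. 0 < K c 1}"
proof (rule set_eqI, rule iffI)
  fix c assume "c \<in> {x + inv F (1 + F x) | x. True}"
  then obtain x where c: "c = x + inv F (1 + F x)" by auto
  let ?y = "inv F (1 + F x)"
  have Fy: "F ?y = 1 + F x" by simp
  have "x \<noteq> ?y"
  proof
    assume "x = ?y"
    hence "F x = 1 + F x" using Fy by simp
    thus False by simp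
  qed
  moreover have "F x + F ?y = 1" using Fy by (simp add: add.assoc[symmetric] c2 two0)
  ultimately have "{x, ?y} \<in> {q. card q = 2 \<and> (\<Sum>x\<in>q. x) = c \<and> (\<Sum>x\<in>q. F x) = 1}"
    using c by auto
  hence ne: "{q. card q = 2 \<and> (\<Sum>x\<in>q. x) = c \<and> (\<Sum>x\<in>q. F x) = (1::'a)} \<noteq> {}" by blast
  have fin: "finite {q. card q = 2 \<and> (\<Sum>x\<in>q. x) = c \<and> (\<Sum>x\<in>q. F x) = (1::'a)}"
    by (rule finite_subset[OF subset_UNIV]) simp
  have "0 < K c 1" unfolding K_def using ne fin by (simp add: card_gt_0_iff)
  thus "c \<in> {c. 0 < K c 1}" by simp
next
  fix c assume "c \<in> {c. 0 < K c 1}"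
  have "{q. card q = 2 \<and> (\<Sum>x\<in>q. x) = c \<and> (\<Sum>x\<in>q. F x) = (1::'a)} \<noteq> {}"
  proof
    assume "{q. card q = 2 \<and> (\<Sum>x\<in>q. x) = c \<and> (\<Sum>x\<in>q. F x) = (1::'a)} = {}"
    hence "K c 1 = 0" unfolding K_def by simp
    thus False using \<open>c \<in> {c. 0 < K c 1}\<close> by simp
  qed
  then obtain q where q: "card q = 2" "(\<Sum>x\<in>q. x) = c" "(\<Sum>x\<in>q. F x) = (1::'a)" by blast
  have "\<exists>x y. q = {x, y} \<and> x \<noteq> y" using q(1) by (simp add: card_2_iff)
  then obtain x y where xy0: "q = {x, y}" "x \<noteq> y" by blast
  have xy: "x \<noteq> y" "x + y = c" "F x + F y = 1" using xy0 q by auto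
  hence "F y = 1 + F x" using add_cancel_sym by (metis add.commute)
  hence "y = inv F (1 + F x)" using invF1[of y] by simp
  thus "c \<in> {x + inv F (1 + F x) | x. True}" using xy by auto
qed

lemma v_F_G: "v_F F = card {b. 0 < G b} + (if G 1 = 0 then 1 else 0)"
proof -
  have "v_F F = card {c. 0 < K c 1}" unfolding v_F_def v_at_def v_set ..
  also have "\<dots> = card {b. 0 < K 1 b}"
    unfolding K_inv by (rule card_elems_bij[OF bij_rho]) simp
  also have "{b. 0 < K 1 b} = insert 1 {b. 0 < G b}"
    using K11_pos by (auto simp: G_def)
  also have "card \<dots> = card {b. 0 < G b} + (if G 1 = 0 then 1 else 0)"
    by (simp add: card_insert_if)
  finally show ?thesis .
qed

lemma G_card: "0 < k \<Longrightarrow> card {b. G b = k} = card {b. b \<noteq> 1 \<and> K 1 b = k} + (if K 1 1 - 1 = k then 1 else 0)"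
proof -
  assume k: "0 < k"
  have "{b. G b = k} = {b. b \<noteq> 1 \<and> K 1 b = k} \<union> (if K 1 1 - 1 = k then {1} else {})"
    by (auto simp: G_def)
  thus ?thesis by (simp add: card_Un_disjoint)
qed

lemma h_card: "card {b. K 1 b = k} = card {b. b \<noteq> 1 \<and> K 1 b = k} + (if K 1 1 = k then 1 else 0)"
proof -
  have "{b. K 1 b = k} = {b. b \<noteq> 1 \<and> K 1 b = k} \<union> (if K 1 1 = k then {1} else {})"
    by auto
  thus ?thesis by (simp add: card_Un_disjoint)
qed

end



definition phi :: "'a::zero \<Rightarrow> 'a option" where
  "phi x = (if x = 0 then None else Some x)"

lemma inj_phi: "inj phi" by (rule injI) (auto simp: phi_def split: if_splits)

lemma phi_img: "S \<subseteq> - {0} \<Longrightarrow>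
   Some ` S \<union> (if b then {None} else {}) = phi ` (S \<union> (if b then {0} else {}))"
  by (auto simp: phi_def image_iff)

lemma sum_drop0: "finite T \<Longrightarrow> f 0 = 0 \<Longrightarrow> (\<Sum>x\<in>T - {0}. f x) = (\<Sum>x\<in>T. f x)"
  by (rule sum.mono_neutral_left) auto

context mono begin

lemma E_code: "T \<in> E \<longleftrightarrow> card T = 4 \<and> phi ` T \<in> ext_code_F F"
proof
  assume T: "T \<in> E"
  hence c4: "card T = 4" and s: "(\<Sum>x\<in>T. x) = 0" "(\<Sum>x\<in>T. F x) = 0" unfolding E_def by auto
  have fin: "finite T" by simp
  let ?S = "T - {0}"
  have Sc: "?S \<in> code_F F" unfolding code_F_def
    using s sum_drop0[OF fin, of "\<lambda>x. x"] sum_drop0[OF fin, of F] by auto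
  have "T = ?S \<union> (if odd (card ?S) then {0} else {})"
  proof (cases "0 \<in> T")
    case True
    hence "card ?S = 3" using c4 by simp
    thus ?thesis using True by auto
  next
    case False
    thus ?thesis using c4 by simp
  qed
  hence "phi ` T = Some ` ?S \<union> (if odd (card ?S) then {None} else {})"
    using phi_img[of ?S "odd (card ?S)"] by auto
  thus "card T = 4 \<and> phi ` T \<in> ext_code_F F" using Sc c4 unfolding ext_code_F_def by blast
next
  assume a: "card T = 4 \<and> phi ` T \<in> ext_code_F F"
  then obtain S where S: "S \<in> code_F F" "phi ` T = Some ` S \<union> (if odd (card S) then {None} else {})"
    unfolding ext_code_F_def by blast
  have Ss: "S \<subseteq> - {0}" and s: "(\<Sum>x\<in>S. x) = 0" "(\<Sum>x\<in>S. F x) = 0" using S(1) unfolding code_F_def by auto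
  have "phi ` T = phi ` (S \<union> (if odd (card S) then {0} else {}))" using S(2) phi_img[OF Ss] by simp
  hence T: "T = S \<union> (if odd (card S) then {0} else {})" by (simp only: inj_image_eq_iff[OF inj_phi])
  have fin: "finite (S \<union> {0})" by simp
  have "(\<Sum>x\<in>T. x) = 0 \<and> (\<Sum>x\<in>T. F x) = 0"
  proof (cases "odd (card S)")
    case True
    have "(S \<union> {0}) - {0} = S" using Ss by auto
    thus ?thesis using True T s sum_drop0[OF fin, of "\<lambda>x. x"] sum_drop0[OF fin, of F] by simp
  next
    case False thus ?thesis using T s by simp
  qed
  thus "T \<in> E" using a unfolding E_def by simp
qed

end



lemma ext_code_sub: "X \<in> ext_code_F F \<Longrightarrow> X \<subseteq> ext_coords"
  unfolding ext_code_F_def code_F_def ext_coords_def by (auto split: if_splits)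

lemma ext_coords_phi: "ext_coords = range phi"
  unfolding ext_coords_def phi_def by (auto simp: image_iff)

theorem mainTheorem13:
  fixes t1 t2 m :: nat
  assumes card: "card (UNIV :: 'a::{field,finite} set) = 2 ^ m"
    and t1: "0 < t1" "coprime t1 (2 ^ m - 1)"
    and t2: "0 < t2" "coprime t2 (2 ^ m - 1)"
    and ccz: "CCZ_equiv (\<lambda>x::'a. x ^ t1) (\<lambda>x::'a. x ^ t2)"
  shows "Vstar (\<lambda>x::'a. x ^ t1) = Vstar (\<lambda>x::'a. x ^ t2)
       \<and> v_F (\<lambda>x::'a. x ^ t1) = v_F (\<lambda>x::'a. x ^ t2)"
proof -
  interpret M1: mono t1 m "\<lambda>x::'a. x ^ t1" using card t1 by unfold_locales auto
  interpret M2: mono t2 m "\<lambda>x::'a. x ^ t2" using card t2 by unfold_locales auto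
  have c01: "card {0::'a, 1} \<le> card (UNIV::'a set)" by (rule card_mono) auto
  show ?thesis
  proof (cases "m \<le> 1")
    case True
    have "card (UNIV::'a set) \<le> 2" using card True
      by (metis One_nat_def le_Suc_eq nat_power_eq_Suc_0_iff power_increasing_iff power_one_right one_less_numeral_iff semiring_norm(76) le_refl)
    hence "UNIV = {0::'a, 1}" using c01
      by (metis card_subset_eq finite subset_UNIV antisym card_2_iff zero_neq_one)
    hence "\<And>x::'a. x = 0 \<or> x = 1" by auto
    hence "\<And>x::'a. x ^ t1 = x ^ t2" using t1 t2 by (metis power_one zero_power)
    hence "(\<lambda>x::'a. x ^ t1) = (\<lambda>x. x ^ t2)" by auto
    thus ?thesis by simp
  next
    case False
    have n2: "2 \<le> (card (UNIV::'a set) - 1)"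
    proof -
      have "(2::nat) ^ 2 \<le> 2 ^ m" using False by (intro power_increasing) auto
      thus ?thesis using card by simp
    qed
    obtain \<sigma> where \<sigma>: "bij_betw \<sigma> ext_coords ext_coords"
      "(\<lambda>S. \<sigma> ` S) ` ext_code_F (\<lambda>x::'a. x ^ t1) = ext_code_F (\<lambda>x::'a. x ^ t2)"
      using ccz unfolding CCZ_equiv_def codes_equivalent_def by blast
    define \<psi> :: "'a option \<Rightarrow> 'a" where "\<psi> w = (case w of None \<Rightarrow> 0 | Some x \<Rightarrow> x)" for w
    define g where "g = \<psi> \<circ> \<sigma> \<circ> phi"
    have phipsi: "phi (\<psi> y) = y" if "y \<in> ext_coords" for y
      using that unfolding ext_coords_def \<psi>_def phi_def by auto
    have \<sigma>in: "\<sigma> (phi x) \<in> ext_coords" for x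
      using \<sigma>(1) ext_coords_phi by (auto simp: bij_betw_def)
    have injs: "inj_on \<sigma> ext_coords" using \<sigma>(1) by (simp add: bij_betw_def)
    have phig: "phi (g x) = \<sigma> (phi x)" for x unfolding g_def using phipsi[OF \<sigma>in] by simp
    have ginj: "inj g"
    proof (rule injI)
      fix x y assume "g x = g y"
      hence "\<sigma> (phi x) = \<sigma> (phi y)" using phig by metis
      hence "phi x = phi y" using injs ext_coords_phi by (auto dest: inj_onD)
      thus "x = y" using inj_phi by (auto dest: injD)
    qed
    have gbij: "bij g" using ginj by (simp add: bij_def finite_UNIV_inj_surj)
    have phiimg: "phi ` (g ` T) = \<sigma> ` (phi ` T)" for T
      by (simp add: image_image phig)
    have L2: "X \<in> ext_code_F (\<lambda>x::'a. x ^ t1) \<longleftrightarrow> \<sigma> ` X \<in> ext_code_F (\<lambda>x::'a. x ^ t2)"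
      if X: "X \<subseteq> ext_coords" for X
    proof
      assume "X \<in> ext_code_F (\<lambda>x::'a. x ^ t1)" thus "\<sigma> ` X \<in> ext_code_F (\<lambda>x::'a. x ^ t2)"
        using \<sigma>(2) by blast
    next
      assume "\<sigma> ` X \<in> ext_code_F (\<lambda>x::'a. x ^ t2)"
      then obtain Y where Y: "Y \<in> ext_code_F (\<lambda>x::'a. x ^ t1)" "\<sigma> ` X = \<sigma> ` Y"
        using \<sigma>(2) by (metis (no_types, lifting) imageE)
      have "X = Y" using Y ext_code_sub[OF Y(1)] X injs by (simp add: inj_on_image_eq_iff)
      thus "X \<in> ext_code_F (\<lambda>x::'a. x ^ t1)" using Y by simp
    qed
    have Eeq: "T \<in> M1.E \<longleftrightarrow> g ` T \<in> M2.E" for T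
    proof -
      have sub: "phi ` T \<subseteq> ext_coords" using ext_coords_phi by auto
      have "card (g ` T) = card T" using ginj by (simp add: card_image inj_on_subset)
      thus ?thesis unfolding M1.E_code M2.E_code phiimg using L2[OF sub] by simp
    qed
    interpret EQ: equiv_sets g M1.E M2.E using gbij Eeq by unfold_locales auto
    have U1: "U M2.E (card (UNIV::'a set) - 1) (M1.K 1 1) = U M1.E (card (UNIV::'a set) - 1) (M1.K 1 1)" by (rule EQ.U_inv)
    have K11: "M1.K 1 1 = M2.K 1 1"
    proof (rule ccontr)
      assume ne: "M1.K 1 1 \<noteq> M2.K 1 1"
      from U1 show False unfolding M1.U_E M2.U_E using ne n2 by (auto split: if_splits)
    qed
    have h: "card {b. M1.K 1 b = k} = card {b. M2.K 1 b = k}" if k: "0 < k" for k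
    proof -
      have "(card (UNIV::'a set) - 1) * (k * card {b. M1.K 1 b = k}) = (card (UNIV::'a set) - 1) * (k * card {b. M2.K 1 b = k})"
        using EQ.cnt_inv[of k] unfolding M1.cnt_E M2.cnt_E by (rule sym)
      thus ?thesis using k n2 by auto
    qed
    have Gc: "card {b. M1.G b = k} = card {b. M2.G b = k}" if k: "0 < k" for k
    proof -
      have "card {b. b \<noteq> 1 \<and> M1.K 1 b = k} = card {b. b \<noteq> 1 \<and> M2.K 1 b = k}"
        using h[OF k] M1.h_card[of k] M2.h_card[of k] K11 by simp
      thus ?thesis using M1.G_card[OF k] M2.G_card[OF k] K11 by simp
    qed
    have V: "Vstar (\<lambda>x::'a. x ^ t1) = Vstar (\<lambda>x::'a. x ^ t2)"
    proof (rule multiset_eqI)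
      fix k show "count (Vstar (\<lambda>x::'a. x ^ t1)) k = count (Vstar (\<lambda>x::'a. x ^ t2)) k"
        unfolding M1.count_Vstar M2.count_Vstar using Gc by simp
    qed
    have "card {b. 0 < M1.G b} = card {b. 0 < M2.G b}"
      using arg_cong[OF V, of size] unfolding M1.size_Vstar M2.size_Vstar .
    moreover have "M1.G 1 = M2.G 1" unfolding M1.G_def M2.G_def using K11 by simp
    ultimately have "v_F (\<lambda>x::'a. x ^ t1) = v_F (\<lambda>x::'a. x ^ t2)"
      unfolding M1.v_F_G M2.v_F_G by simp
    with V show ?thesis by simp
  qed
qed


end
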